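(* Let $p\geq 3$ and $q\geq 6$ be integers and let $C_{p,q}$ be a double chain consisting of $p$ points of $A$ and $q$ points of $B$, in general position. Then $\mu(D(C_{p,q}))=\binom{p+q}{2}-4$.
   Context: Let $A$ be the arc of a circle that goes from $(-5,2)$ to $(5,2)$ and passes through $(0,3/2)$, and let $B$ be the reflection of $A$ in the $x$-axis; then every point of $A$ (resp. $B$) lies above (resp. below) every line spanned by two points of $B$ (resp. $A$). For integers $p,q\geq 1$, a double chain $C_{p,q}$ is a set of $p+q$ points obtained by choosing $p$ points of $A$ and $q$ points of $B$. A set of points is in general position if no three are collinear. The disjointness graph of segments $D(P)$ is the graph whose vertices are all closed straight-line segments with both endpoints in $P$, two being adjacent if and only if they are disjoint. For a graph $G$ and $U\subseteq V(G)$, two distinct vertices $x,y\in U$ are $U$-mutually visible if $G$ contains a shortest $x$-$y$ path none of whose internal vertices lies in $U$; $U$ is a mutual-visibility set if every two distinct vertices of $U$ are $U$-mutually visible. $\mu(G)$ is the maximum size of a mutual-visibility set of $G$. *)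

theory Defs
  imports "HOL-Analysis.Analysis"
begin

text \<open>The circle through (-5,2), (5,2), (0,3/2) has centre (0,107/4) and radius 101/4.
  The arc A from (-5,2) to (5,2) through (0,3/2) is its lower part with -5 <= x <= 5.\<close>

definition arcA :: "(real \<times> real) set" where
  "arcA = {(x, y). x\<^sup>2 + (y - 107/4)\<^sup>2 = (101/4)\<^sup>2 \<and> -5 \<le> x \<and> x \<le> 5 \<and> y \<le> 2}"

definition arcB :: "(real \<times> real) set" where
  "arcB = (\<lambda>(x, y). (x, - y)) ` arcA"

definition general_position :: "(real \<times> real) set \<Rightarrow> bool" where
  "general_position P \<longleftrightarrow> (\<forall>S \<subseteq> P. card S = 3 \<longrightarrow> \<not> collinear S)"

definition double_chain :: "(real \<times> real) set \<Rightarrow> nat \<Rightarrow> nat \<Rightarrow> bool" where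
  "double_chain P p q \<longleftrightarrow> finite P \<and> P \<subseteq> arcA \<union> arcB \<and>
      card (P \<inter> arcA) = p \<and> card (P \<inter> arcB) = q"

definition seg_vertices :: "(real \<times> real) set \<Rightarrow> (real \<times> real) set set" where
  "seg_vertices P = {closed_segment a b | a b. a \<in> P \<and> b \<in> P \<and> a \<noteq> b}"

definition disj_adj :: "(real \<times> real) set \<Rightarrow> (real \<times> real) set \<Rightarrow> bool" where
  "disj_adj S T \<longleftrightarrow> S \<inter> T = {}"

definition is_walk :: "'v set \<Rightarrow> ('v \<Rightarrow> 'v \<Rightarrow> bool) \<Rightarrow> 'v list \<Rightarrow> bool" where
  "is_walk V E xs \<longleftrightarrow> xs \<noteq> [] \<and> set xs \<subseteq> V \<and>
      (\<forall>i. Suc i < length xs \<longrightarrow> E (xs ! i) (xs ! Suc i))"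

definition is_shortest_path :: "'v set \<Rightarrow> ('v \<Rightarrow> 'v \<Rightarrow> bool) \<Rightarrow> 'v \<Rightarrow> 'v \<Rightarrow> 'v list \<Rightarrow> bool" where
  "is_shortest_path V E x y xs \<longleftrightarrow> is_walk V E xs \<and> hd xs = x \<and> last xs = y \<and>
      (\<forall>ys. is_walk V E ys \<and> hd ys = x \<and> last ys = y \<longrightarrow> length xs \<le> length ys)"

definition mutually_visible :: "'v set \<Rightarrow> ('v \<Rightarrow> 'v \<Rightarrow> bool) \<Rightarrow> 'v set \<Rightarrow> 'v \<Rightarrow> 'v \<Rightarrow> bool" where
  "mutually_visible V E U x y \<longleftrightarrow>
     (\<exists>xs. is_shortest_path V E x y xs \<and> set (butlast (tl xs)) \<inter> U = {})"

definition mv_set :: "'v set \<Rightarrow> ('v \<Rightarrow> 'v \<Rightarrow> bool) \<Rightarrow> 'v set \<Rightarrow> bool" where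
  "mv_set V E U \<longleftrightarrow> U \<subseteq> V \<and>
     (\<forall>x\<in>U. \<forall>y\<in>U. x \<noteq> y \<longrightarrow> mutually_visible V E U x y)"

definition mu :: "'v set \<Rightarrow> ('v \<Rightarrow> 'v \<Rightarrow> bool) \<Rightarrow> nat" where
  "mu V E = Max {card U | U. mv_set V E U}"

end

theory Submission
  imports Defs
begin
lemma arcB_iff: "p \<in> arcB \<longleftrightarrow> (fst p)\<^sup>2 + (snd p + 107/4)\<^sup>2 = (101/4)\<^sup>2 \<and> -5 \<le> fst p \<and> fst p \<le> 5 \<and> -2 \<le> snd p"
proof
  assume "p \<in> arcB"
  then obtain x y where "(x,y) \<in> arcA" "p = (x,-y)" unfolding arcB_def by auto
  then show "(fst p)\<^sup>2 + (snd p + 107/4)\<^sup>2 = (101/4)\<^sup>2 \<and> -5 \<le> fst p \<and> fst p \<le> 5 \<and> -2 \<le> snd p"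
    unfolding arcA_def by (auto simp: power2_eq_square algebra_simps)
next
  assume h: "(fst p)\<^sup>2 + (snd p + 107/4)\<^sup>2 = (101/4)\<^sup>2 \<and> -5 \<le> fst p \<and> fst p \<le> 5 \<and> -2 \<le> snd p"
  have "(fst p, - snd p) \<in> arcA" using h unfolding arcA_def by (auto simp: power2_eq_square algebra_simps)
  then have "(\<lambda>(x, y). (x, - y)) (fst p, - snd p) \<in> arcB" unfolding arcB_def by (rule imageI)
  then show "p \<in> arcB" by simp
qed

lemma arcA_iff: "p \<in> arcA \<longleftrightarrow> (fst p)\<^sup>2 + (snd p - 107/4)\<^sup>2 = (101/4)\<^sup>2 \<and> -5 \<le> fst p \<and> fst p \<le> 5 \<and> snd p \<le> 2"
  unfolding arcA_def by (cases p) auto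

lemma sq_bound:
  fixes z a :: real
  assumes "z > 0" "a > 0" "z\<^sup>2 \<ge> a\<^sup>2" shows "z \<ge> a"
  using assms power2_le_imp_le[of a z] by auto

lemma sq_bound2:
  fixes z a :: real
  assumes "a > 0" "z\<^sup>2 \<le> a\<^sup>2" shows "z \<le> a"
  using assms power2_le_imp_le[of z a] by auto


lemma B_bnd: assumes "p \<in> arcB" shows "99/4 \<le> snd p + 107/4" "snd p + 107/4 \<le> 101/4"
proof -
  have e: "(fst p)\<^sup>2 + (snd p + 107/4)\<^sup>2 = (101/4)\<^sup>2" "-5 \<le> fst p" "fst p \<le> 5" "-2 \<le> snd p"
    using assms unfolding arcB_iff by auto
  have "0 \<le> (5 - fst p)*(5 + fst p)" using e(2,3) by (intro mult_nonneg_nonneg) auto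
  then have f: "(fst p)\<^sup>2 \<le> 25" by (simp add: power2_eq_square algebra_simps)
  have "(99/4::real)\<^sup>2 = (101/4)\<^sup>2 - 25" by (simp add: power2_eq_square)
  then have "(snd p + 107/4)\<^sup>2 \<ge> (99/4)\<^sup>2" using e(1) f by linarith
  then show "99/4 \<le> snd p + 107/4" using e(4) by (intro sq_bound[of "snd p + 107/4" "99/4"]) auto
  have "(snd p + 107/4)\<^sup>2 \<le> (101/4)\<^sup>2" using e(1) zero_le_power2[of "fst p"] by linarith
  then show "snd p + 107/4 \<le> 101/4" using sq_bound2[of "101/4" "snd p + 107/4"] by simp
qed

lemma A_bnd: assumes "p \<in> arcA" shows "99/4 \<le> 107/4 - snd p" "107/4 - snd p \<le> 101/4"
proof -
  have e: "(fst p)\<^sup>2 + (snd p - 107/4)\<^sup>2 = (101/4)\<^sup>2" "-5 \<le> fst p" "fst p \<le> 5" "snd p \<le> 2"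
    using assms unfolding arcA_iff by auto
  have e1: "(fst p)\<^sup>2 + (107/4 - snd p)\<^sup>2 = (101/4)\<^sup>2" using e(1) power2_commute[of "snd p" "107/4"] by simp
  have "0 \<le> (5 - fst p)*(5 + fst p)" using e(2,3) by (intro mult_nonneg_nonneg) auto
  then have f: "(fst p)\<^sup>2 \<le> 25" by (simp add: power2_eq_square algebra_simps)
  have "(99/4::real)\<^sup>2 = (101/4)\<^sup>2 - 25" by (simp add: power2_eq_square)
  then have "(107/4 - snd p)\<^sup>2 \<ge> (99/4)\<^sup>2" using e1 f by linarith
  then show "99/4 \<le> 107/4 - snd p" using e(4) by (intro sq_bound[of "107/4 - snd p" "99/4"]) auto
  have "(107/4 - snd p)\<^sup>2 \<le> (101/4)\<^sup>2" using e1 zero_le_power2[of "fst p"] by linarith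
  then show "107/4 - snd p \<le> 101/4" using sq_bound2[of "101/4" "107/4 - snd p"] by simp
qed

lemma AB_disj: "arcA \<inter> arcB = {}"
proof (rule ccontr)
  assume "arcA \<inter> arcB \<noteq> {}"
  then obtain p where "p \<in> arcA" "p \<in> arcB" by auto
  then show False using A_bnd(2)[of p] B_bnd(2)[of p] by linarith
qed

lemma B_circ: "p \<in> arcB \<Longrightarrow> (fst p)\<^sup>2 + (snd p + 107/4)\<^sup>2 = (101/4)\<^sup>2"
  unfolding arcB_iff by auto
lemma B_x: "p \<in> arcB \<Longrightarrow> \<bar>fst p\<bar> \<le> 5"
  unfolding arcB_iff by auto
lemma A_x: "p \<in> arcA \<Longrightarrow> \<bar>fst p\<bar> \<le> 5"
  unfolding arcA_iff by auto

lemma B_slope: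
  assumes u: "u \<in> arcB" and w: "w \<in> arcB"
  shows "\<bar>snd w - snd u\<bar> \<le> \<bar>fst w - fst u\<bar> / 4"
proof -
  have "(snd w + 107/4)\<^sup>2 - (snd u + 107/4)\<^sup>2 = (fst u)\<^sup>2 - (fst w)\<^sup>2"
    using B_circ[OF u] B_circ[OF w] by linarith
  moreover have sqd: "\<And>a b c::real. (a+c)\<^sup>2 - (b+c)\<^sup>2 = (a-b)*((a+c)+(b+c))"
    by (simp add: power2_eq_square algebra_simps)
  moreover have "(snd w + 107/4)\<^sup>2 - (snd u + 107/4)\<^sup>2 = (snd w - snd u) * ((snd w + 107/4) + (snd u + 107/4))"
    by (rule sqd)
  moreover have "(fst u)\<^sup>2 - (fst w)\<^sup>2 = (fst u - fst w) * (fst u + fst w)"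
    by (simp add: power2_eq_square algebra_simps)
  ultimately have eq: "\<bar>snd w - snd u\<bar> * \<bar>(snd w + 107/4) + (snd u + 107/4)\<bar> = \<bar>fst u - fst w\<bar> * \<bar>fst u + fst w\<bar>"
    by (metis abs_mult)
  have S: "\<bar>(snd w + 107/4) + (snd u + 107/4)\<bar> \<ge> 99/2" using B_bnd[OF u] B_bnd[OF w] by linarith
  have T: "\<bar>fst u + fst w\<bar> \<le> 10" using B_x[OF u] B_x[OF w] by linarith
  have "\<bar>snd w - snd u\<bar> * (99/2) \<le> \<bar>snd w - snd u\<bar> * \<bar>(snd w + 107/4) + (snd u + 107/4)\<bar>"
    using S by (intro mult_left_mono) auto
  also have "\<dots> \<le> \<bar>fst u - fst w\<bar> * 10" unfolding eq using T by (intro mult_left_mono) auto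
  finally have "\<bar>snd w - snd u\<bar> * (99/2) \<le> \<bar>fst u - fst w\<bar> * 10" .
  moreover have gen: "\<And>s f::real. s*(99/2) \<le> f*10 \<Longrightarrow> 0 \<le> f \<Longrightarrow> s \<le> f/4" by linarith
  ultimately show ?thesis using abs_minus_commute[of "fst u" "fst w"] by (metis abs_ge_zero)
qed

lemma B_inj: "u \<in> arcB \<Longrightarrow> w \<in> arcB \<Longrightarrow> fst u = fst w \<Longrightarrow> u = w"
  using B_slope[of u w] by (simp add: prod_eq_iff)

definition LB :: "real \<times> real \<Rightarrow> real \<times> real \<Rightarrow> real \<times> real \<Rightarrow> real" where
  "LB u v p = fst p * (fst u + fst v) + (snd p + 107/4) * (snd u + snd v + 107/2)"
definition kB :: "real \<times> real \<Rightarrow> real \<times> real \<Rightarrow> real" where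
  "kB u v = (101/4)\<^sup>2 + fst u * fst v + (snd u + 107/4) * (snd v + 107/4)"

lemma LB_aff: "LB u v ((1-t) *\<^sub>R p + t *\<^sub>R q) = (1-t) * LB u v p + t * LB u v q"
  by (simp add: LB_def field_simps)

lemma B_side:
  assumes "w \<in> arcB"
  shows "LB u v w - kB u v = - ((fst w - fst u)*(fst w - fst v) + (snd w - snd u)*(snd w - snd v))"
proof -
  have "LB u v w - kB u v + ((fst w - fst u)*(fst w - fst v) + (snd w - snd u)*(snd w - snd v))
      = (fst w)\<^sup>2 + (snd w + 107/4)\<^sup>2 - (101/4)\<^sup>2"
    by (simp add: LB_def kB_def power2_eq_square algebra_simps)
  then show ?thesis using B_circ[OF assms] by linarith
qed

lemma LB_self: "u \<in> arcB \<Longrightarrow> LB u v u = kB u v" "v \<in> arcB \<Longrightarrow> LB u v v = kB u v"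
  using B_side[of u u v] B_side[of v u v] by auto

lemma sign_lemma:
  fixes P Q :: real
  assumes "\<bar>Q\<bar> \<le> \<bar>P\<bar> / 16"
  shows "P > 0 \<Longrightarrow> P + Q > 0" "P < 0 \<Longrightarrow> P + Q < 0"
  using assms by (auto simp: abs_if split: if_splits)

lemma B_Q:
  assumes "u \<in> arcB" "v \<in> arcB" "w \<in> arcB"
  shows "\<bar>(snd w - snd u)*(snd w - snd v)\<bar> \<le> \<bar>(fst w - fst u)*(fst w - fst v)\<bar> / 16"
proof -
  have "\<bar>(snd w - snd u)*(snd w - snd v)\<bar> = \<bar>snd w - snd u\<bar> * \<bar>snd w - snd v\<bar>" by (simp add: abs_mult)
  also have "\<dots> \<le> (\<bar>fst w - fst u\<bar> / 4) * (\<bar>fst w - fst v\<bar> / 4)"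
    using B_slope[OF assms(1,3)] B_slope[OF assms(2,3)] by (intro mult_mono) auto
  also have "\<dots> = \<bar>(fst w - fst u)*(fst w - fst v)\<bar> / 16" by (simp add: abs_mult)
  finally show ?thesis .
qed

lemma B_inside:
  assumes "u \<in> arcB" "v \<in> arcB" "w \<in> arcB" "(fst w - fst u)*(fst w - fst v) < 0"
  shows "LB u v w > kB u v"
  using B_side[OF assms(3), of u v] sign_lemma(2)[OF B_Q[OF assms(1-3)] assms(4)] by linarith

lemma B_outside:
  assumes "u \<in> arcB" "v \<in> arcB" "w \<in> arcB" "(fst w - fst u)*(fst w - fst v) > 0"
  shows "LB u v w < kB u v"
  using B_side[OF assms(3), of u v] sign_lemma(1)[OF B_Q[OF assms(1-3)] assms(4)] by linarith

lemma A_above: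
  assumes u: "u \<in> arcB" and v: "v \<in> arcB" and a: "a \<in> arcA"
  shows "LB u v a > kB u v"
proof -
  have h1: "fst u * fst v \<le> 25"
  proof -
    have "\<bar>fst u * fst v\<bar> = \<bar>fst u\<bar> * \<bar>fst v\<bar>" by (simp add: abs_mult)
    also have "\<dots> \<le> 5 * 5" using B_x[OF u] B_x[OF v] by (intro mult_mono) auto
    finally show ?thesis by linarith
  qed
  have h2: "(snd u + 107/4) * (snd v + 107/4) \<le> (101/4) * (101/4)"
    using B_bnd[OF u] B_bnd[OF v] by (intro mult_mono) auto
  have h3: "fst a * (fst u + fst v) \<ge> -50"
  proof -
    have "\<bar>fst a * (fst u + fst v)\<bar> = \<bar>fst a\<bar> * \<bar>fst u + fst v\<bar>" by (simp add: abs_mult)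
    also have "\<dots> \<le> 5 * 10" using A_x[OF a] B_x[OF u] B_x[OF v] by (intro mult_mono) auto
    finally show ?thesis by linarith
  qed
  have h4: "(snd a + 107/4) * (snd u + snd v + 107/2) \<ge> (113/4) * (99/2)"
    using A_bnd[OF a] B_bnd[OF u] B_bnd[OF v] by (intro mult_mono) auto
  show ?thesis unfolding LB_def kB_def using h1 h2 h3 h4 by (simp add: power2_eq_square)
qed

lemma Sep1:
  fixes L :: "real \<times> real \<Rightarrow> real"
  assumes aff: "\<And>p q t. L ((1-t) *\<^sub>R p + t *\<^sub>R q) = (1-t) * L p + t * L q"
    and "L a > k" "L b > k" "L c \<le> k" "L d \<le> k"
  shows "closed_segment a b \<inter> closed_segment c d = {}"
proof (rule ccontr)
  assume "closed_segment a b \<inter> closed_segment c d \<noteq> {}"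
  then obtain z where "z \<in> closed_segment a b" "z \<in> closed_segment c d" by auto
  then obtain t s where z1: "z = (1-t) *\<^sub>R a + t *\<^sub>R b" "0\<le>t" "t\<le>1"
    and z2: "z = (1-s) *\<^sub>R c + s *\<^sub>R d" "0\<le>s" "s\<le>1" unfolding in_segment by metis
  have "L z = (1-t)*L a + t * L b" unfolding z1(1) by (rule aff)
  then have "L z - k = (1-t)*(L a - k) + t * (L b - k)" by (simp add: algebra_simps)
  moreover have "(1-t)*(L a - k) + t * (L b - k) > 0"
  proof (cases "t = 0")
    case True then show ?thesis using assms by simp
  next
    case False
    then have "t * (L b - k) > 0" using z1 assms by simp
    moreover have "(1-t)*(L a - k) \<ge> 0" using z1 assms by simp
    ultimately show ?thesis by linarith
  qed
  moreover have "L z = (1-s)*L c + s * L d" unfolding z2(1) by (rule aff)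
  then have "L z - k = (1-s)*(L c - k) + s * (L d - k)" by (simp add: algebra_simps)
  moreover have "(1-s)*(L c - k) \<le> 0" "s * (L d - k) \<le> 0" using z2 assms
    by (simp_all add: mult_nonneg_nonpos)
  ultimately show False by linarith
qed

lemma Sep2:
  fixes L :: "real \<times> real \<Rightarrow> real"
  assumes aff: "\<And>p q t. L ((1-t) *\<^sub>R p + t *\<^sub>R q) = (1-t) * L p + t * L q"
    and "L a > k" "L b = k" "L c = k" "L d < k" "b \<noteq> c"
  shows "closed_segment a b \<inter> closed_segment c d = {}"
proof (rule ccontr)
  assume "closed_segment a b \<inter> closed_segment c d \<noteq> {}"
  then obtain z where "z \<in> closed_segment a b" "z \<in> closed_segment c d" by auto
  then obtain t s where z1: "z = (1-t) *\<^sub>R a + t *\<^sub>R b" "0\<le>t" "t\<le>1"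
    and z2: "z = (1-s) *\<^sub>R c + s *\<^sub>R d" "0\<le>s" "s\<le>1" unfolding in_segment by metis
  have "L z = (1-t)*L a + t * L b" unfolding z1(1) by (rule aff)
  then have e1: "L z - k = (1-t)*(L a - k)" using assms by (simp add: algebra_simps)
  have "L z = (1-s)*L c + s * L d" unfolding z2(1) by (rule aff)
  then have e2: "L z - k = s*(L d - k)" using assms by (simp add: algebra_simps)
  have "(1-t)*(L a - k) \<ge> 0" using z1 assms by simp
  moreover have "s*(L d - k) \<le> 0" using z2 assms by (simp add: mult_nonneg_nonpos)
  ultimately have "(1-t)*(L a - k) = 0" "s*(L d - k) = 0" using e1 e2 by linarith+
  then have "t = 1" "s = 0" using assms by auto
  then show False using z1 z2 assms by simp
qed


lemma LB_aff_neg: "- LB u v ((1-t) *\<^sub>R p + t *\<^sub>R q) = (1-t) * (- LB u v p) + t * (- LB u v q)"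
  unfolding LB_aff by (simp add: algebra_simps)

lemma AB_BB_aux:
  assumes a: "a \<in> arcA" and b: "b \<in> arcB" and c: "c \<in> arcB" and d: "d \<in> arcB"
    and bc: "b \<noteq> c" and bd: "b \<noteq> d" and cd: "fst c < fst d"
  shows "closed_segment a b \<inter> closed_segment c d = {}"
proof -
  have "fst b \<noteq> fst c" using B_inj[OF b c] bc by auto
  moreover have "fst b \<noteq> fst d" using B_inj[OF b d] bd by auto
  ultimately consider "fst c < fst b" "fst b < fst d" | "fst b < fst c" | "fst d < fst b" using cd by linarith
  then show ?thesis
  proof cases
    case 1
    have "(fst b - fst c)*(fst b - fst d) < 0" using 1 by (intro mult_pos_neg) auto
    then have "LB c d b > kB c d" by (rule B_inside[OF c d b])
    then show ?thesis
      by (intro Sep1[where L="LB c d" and k="kB c d"] LB_aff A_above[OF c d a]) (auto simp: LB_self c d)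
  next
    case 2
    have "(fst d - fst b)*(fst d - fst c) > 0" using 2 cd by (intro mult_pos_pos) auto
    then have "LB b c d < kB b c" by (rule B_outside[OF b c d])
    then show ?thesis
      by (intro Sep2[where L="LB b c" and k="kB b c"] LB_aff A_above[OF b c a] bc) (auto simp: LB_self b c)
  next
    case 3
    have "(fst c - fst d)*(fst c - fst b) > 0" using 3 cd by (intro mult_neg_neg) auto
    then have "LB d b c < kB d b" by (rule B_outside[OF d b c])
    then have "closed_segment a b \<inter> closed_segment d c = {}"
      using bd by (intro Sep2[where L="LB d b" and k="kB d b"] LB_aff A_above[OF d b a]) (auto simp: LB_self b d)
    then show ?thesis by (simp add: closed_segment_commute)
  qed
qed

lemma AB_BB:
  assumes a: "a \<in> arcA" and b: "b \<in> arcB" and c: "c \<in> arcB" and d: "d \<in> arcB"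
    and bc: "b \<noteq> c" and bd: "b \<noteq> d" and cd: "c \<noteq> d"
  shows "closed_segment a b \<inter> closed_segment c d = {}"
proof -
  have "fst c \<noteq> fst d" using B_inj[OF c d] cd by auto
  then consider "fst c < fst d" | "fst d < fst c" by linarith
  then show ?thesis
  proof cases
    case 1 then show ?thesis using AB_BB_aux[OF a b c d bc bd] by simp
  next
    case 2 then show ?thesis using AB_BB_aux[OF a b d c bd bc] by (simp add: closed_segment_commute)
  qed
qed

lemma consecB:
  assumes u: "u \<in> arcB" and v: "v \<in> arcB" and uv: "fst u < fst v"
    and e1: "e1 \<in> arcA \<union> arcB" and e2: "e2 \<in> arcA \<union> arcB" and e12: "e1 \<noteq> e2"
    and n1: "e1 \<notin> {u,v}" and n2: "e2 \<notin> {u,v}"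
    and o1: "e1 \<in> arcB \<Longrightarrow> (fst e1 - fst u)*(fst e1 - fst v) > 0"
    and o2: "e2 \<in> arcB \<Longrightarrow> (fst e2 - fst u)*(fst e2 - fst v) > 0"
  shows "closed_segment u v \<inter> closed_segment e1 e2 = {}"
proof -
  have unv: "u \<noteq> v" using uv by auto
  consider "e1 \<in> arcB" "e2 \<in> arcB" | "e1 \<in> arcA" "e2 \<in> arcA" | "e1 \<in> arcA" "e2 \<in> arcB"
    | "e1 \<in> arcB" "e2 \<in> arcA" using e1 e2 by auto
  then show ?thesis
  proof cases
    case 1
    have "LB u v e1 < kB u v" "LB u v e2 < kB u v" using 1 o1 o2 B_outside[OF u v] by auto
    then have "closed_segment e1 e2 \<inter> closed_segment u v = {}"
      by (intro Sep1[where L="\<lambda>p. - LB u v p" and k="- kB u v"] LB_aff_neg) (auto simp: LB_self u v)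
    then show ?thesis by blast
  next
    case 2
    have "LB u v e1 > kB u v" "LB u v e2 > kB u v" using 2 A_above[OF u v] by auto
    then have "closed_segment e1 e2 \<inter> closed_segment u v = {}"
      by (intro Sep1[where L="LB u v" and k="kB u v"] LB_aff) (auto simp: LB_self u v)
    then show ?thesis by blast
  next
    case 3
    have "closed_segment e1 e2 \<inter> closed_segment u v = {}"
      using 3 n2 unv by (intro AB_BB u v) auto
    then show ?thesis by blast
  next
    case 4
    have "closed_segment e2 e1 \<inter> closed_segment u v = {}"
      using 4 n1 unv by (intro AB_BB u v) auto
    then show ?thesis by (auto simp: closed_segment_commute)
  qed
qed

definition rho :: "real \<times> real \<Rightarrow> real \<times> real" where "rho p = (fst p, - snd p)"

lemma rho_lin: "linear rho"
  by (rule linearI) (auto simp: rho_def)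

lemma rho_rho[simp]: "rho (rho p) = p" by (simp add: rho_def)
lemma rho_fst[simp]: "fst (rho p) = fst p" by (simp add: rho_def)

lemma rho_A: "p \<in> arcA \<Longrightarrow> rho p \<in> arcB"
  by (auto simp: arcA_iff arcB_iff rho_def power2_eq_square algebra_simps)
lemma rho_B: "p \<in> arcB \<Longrightarrow> rho p \<in> arcA"
  by (auto simp: arcA_iff arcB_iff rho_def power2_eq_square algebra_simps)

lemma consecA:
  assumes u: "u \<in> arcA" and v: "v \<in> arcA" and uv: "fst u < fst v"
    and e1: "e1 \<in> arcA \<union> arcB" and e2: "e2 \<in> arcA \<union> arcB" and e12: "e1 \<noteq> e2"
    and n1: "e1 \<notin> {u,v}" and n2: "e2 \<notin> {u,v}"
    and o1: "e1 \<in> arcA \<Longrightarrow> (fst e1 - fst u)*(fst e1 - fst v) > 0"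
    and o2: "e2 \<in> arcA \<Longrightarrow> (fst e2 - fst u)*(fst e2 - fst v) > 0"
  shows "closed_segment u v \<inter> closed_segment e1 e2 = {}"
proof -
  have inj: "\<And>x y. rho x = rho y \<Longrightarrow> x = y" by (metis rho_rho)
  have "closed_segment (rho u) (rho v) \<inter> closed_segment (rho e1) (rho e2) = {}"
  proof (rule consecB)
    show "rho u \<in> arcB" "rho v \<in> arcB" using u v rho_A by auto
    show "fst (rho u) < fst (rho v)" using uv by simp
    show "rho e1 \<in> arcA \<union> arcB" "rho e2 \<in> arcA \<union> arcB" using e1 e2 rho_A[of e1] rho_B[of e1] rho_A[of e2] rho_B[of e2] by blast+
    show "rho e1 \<noteq> rho e2" using e12 inj by blast
    show "rho e1 \<notin> {rho u, rho v}" "rho e2 \<notin> {rho u, rho v}" using n1 n2 inj by blast+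
    show "(fst (rho e1) - fst (rho u))*(fst (rho e1) - fst (rho v)) > 0" if "rho e1 \<in> arcB"
      using o1 rho_B[OF that] by simp
    show "(fst (rho e2) - fst (rho u))*(fst (rho e2) - fst (rho v)) > 0" if "rho e2 \<in> arcB"
      using o2 rho_B[OF that] by simp
  qed
  then have "rho ` closed_segment u v \<inter> rho ` closed_segment e1 e2 = {}"
    by (simp add: closed_segment_linear_image[OF rho_lin])
  then show ?thesis by blast
qed


definition cr :: "real \<times> real \<Rightarrow> real \<times> real \<Rightarrow> real \<times> real \<Rightarrow> real" where
  "cr x y p = (fst y - fst x)*(snd p - snd x) - (snd y - snd x)*(fst p - fst x)"

lemma cr_aff: "cr x y ((1-t) *\<^sub>R p + t *\<^sub>R q) = (1-t) * cr x y p + t * cr x y q"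
  by (simp add: cr_def algebra_simps)

lemma cr_aff_neg: "- cr x y ((1-t) *\<^sub>R p + t *\<^sub>R q) = (1-t) * (- cr x y p) + t * (- cr x y q)"
  unfolding cr_aff by (simp add: algebra_simps)

lemma cr_self: "cr x y x = 0" "cr x y y = 0"
  by (simp_all add: cr_def)

lemma cr_coll:
  assumes "cr x y u = 0" "x \<noteq> y"
  shows "collinear {x,y,u}"
proof -
  have h: "(fst x - fst y)*(snd u - snd y) = (snd x - snd y)*(fst u - fst y)"
    using assms(1) by (simp add: cr_def algebra_simps)
  have "\<exists>t. u = t *\<^sub>R x + (1 - t) *\<^sub>R y"
  proof (cases "fst x = fst y")
    case False
    define t where "t = (fst u - fst y) / (fst x - fst y)"
    have ne: "fst x - fst y \<noteq> 0" using False by simp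
    have "t * (fst x - fst y) = fst u - fst y" unfolding t_def using ne by simp
    moreover have "t * fst x + (1-t) * fst y = t*(fst x - fst y) + fst y" by (simp add: algebra_simps)
    ultimately have "fst u = t * fst x + (1-t) * fst y" by linarith
    moreover have "snd u = t * snd x + (1-t) * snd y"
    proof -
      have "(snd u - snd y) = t * (snd x - snd y)" unfolding t_def using ne h
        by (simp add: field_simps)
      then show ?thesis by (simp add: algebra_simps)
    qed
    ultimately show ?thesis by (intro exI[of _ t]) (simp add: prod_eq_iff)
  next
    case True
    then have ne: "snd x - snd y \<noteq> 0" using assms(2) by (simp add: prod_eq_iff)
    define t where "t = (snd u - snd y) / (snd x - snd y)"
    have "t * (snd x - snd y) = snd u - snd y" unfolding t_def using ne by simp
    moreover have "t * snd x + (1-t) * snd y = t*(snd x - snd y) + snd y" by (simp add: algebra_simps)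
    ultimately have "snd u = t * snd x + (1-t) * snd y" by linarith
    moreover have "fst u = t * fst x + (1-t) * fst y"
    proof -
      have "(fst u - fst y) = 0" using h True ne by simp
      then show ?thesis using True by (simp add: algebra_simps)
    qed
    ultimately show ?thesis by (intro exI[of _ t]) (simp add: prod_eq_iff)
  qed
  then have "collinear {x,u,y}" by (simp add: collinear_3_expand)
  then show ?thesis by (simp add: insert_commute)
qed

lemma gp_cr:
  assumes gp: "general_position P" and "x \<in> P" "y \<in> P" "u \<in> P" "x \<noteq> y" "x \<noteq> u" "y \<noteq> u"
  shows "cr x y u \<noteq> 0"
proof
  assume "cr x y u = 0"
  then have "collinear {x,y,u}" using cr_coll assms by auto
  moreover have "card {x,y,u} = 3" using assms by auto
  moreover have "{x,y,u} \<subseteq> P" using assms by auto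
  ultimately show False using gp unfolding general_position_def by blast
qed

lemma gp_seg:
  assumes gp: "general_position P" and "a \<in> P" "b \<in> P" "c \<in> P" "a \<noteq> b"
    and c: "c \<in> closed_segment a b"
  shows "c = a \<or> c = b"
proof (rule ccontr)
  assume nc: "\<not> (c = a \<or> c = b)"
  obtain t where t: "c = (1-t) *\<^sub>R a + t *\<^sub>R b" using c unfolding in_segment by auto
  have "cr a b c = (1-t) * cr a b a + t * cr a b b" unfolding t by (rule cr_aff)
  then have "cr a b c = 0" by (simp add: cr_self)
  then show False using gp_cr[OF gp, of a b c] assms nc by auto
qed

lemma gp_seg_int:
  assumes gp: "general_position P" and "a \<in> P" "b \<in> P" "a \<noteq> b"
  shows "P \<inter> closed_segment a b = {a,b}"
  using gp_seg[OF gp, of a b] assms by auto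

lemma sep_line:
  assumes "cr x y u > 0 \<longleftrightarrow> cr x y v > 0" "cr x y u \<noteq> 0" "cr x y v \<noteq> 0"
  shows "closed_segment u v \<inter> closed_segment x y = {}"
proof (cases "cr x y u > 0")
  case True
  then show ?thesis using assms
    by (intro Sep1[where L="cr x y" and k=0] cr_aff) (auto simp: cr_self)
next
  case False
  then show ?thesis using assms
    by (intro Sep1[where L="\<lambda>p. - cr x y p" and k=0] cr_aff_neg) (auto simp: cr_self)
qed

lemma common_nb:
  assumes gp: "general_position P" and fin: "finite P" and cP: "card P \<ge> 8"
    and "x \<in> P" "y \<in> P" "z \<in> P" "x \<noteq> y" "x \<noteq> z" "y \<noteq> z"
  shows "\<exists>u v. u \<in> P \<and> v \<in> P \<and> u \<noteq> v \<and> closed_segment u v \<inter> closed_segment x y = {}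
     \<and> closed_segment u v \<inter> closed_segment x z = {}"
proof -
  define R where "R = P - {x,y,z}"
  have "card R = card P - 3" unfolding R_def using assms by (subst card_Diff_subset) auto
  then have cR: "card R \<ge> 5" using cP by linarith
  have finR: "finite R" using fin R_def by auto
  define \<sigma> where "\<sigma> u = (cr x y u > 0, cr x z u > 0)" for u
  have "\<not> inj_on \<sigma> R"
  proof
    assume "inj_on \<sigma> R"
    then have "card (\<sigma> ` R) = card R" by (rule card_image)
    moreover have "card (\<sigma> ` R) \<le> card {(True,True),(True,False),(False,True),(False,False)}"
      by (rule card_mono) auto
    moreover have "card {(True,True),(True,False),(False,True),(False,False)} = 4" by simp
    ultimately show False using cR by linarith
  qed
  then obtain u v where uv: "u \<in> R" "v \<in> R" "u \<noteq> v" "\<sigma> u = \<sigma> v" unfolding inj_on_def by blast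
  have nz: "cr x y u \<noteq> 0" "cr x y v \<noteq> 0" "cr x z u \<noteq> 0" "cr x z v \<noteq> 0"
    using uv assms unfolding R_def by (intro gp_cr[OF gp]; auto)+
  have "closed_segment u v \<inter> closed_segment x y = {}"
    using uv(4) nz by (intro sep_line) (auto simp: \<sigma>_def)
  moreover have "closed_segment u v \<inter> closed_segment x z = {}"
    using uv(4) nz by (intro sep_line) (auto simp: \<sigma>_def)
  ultimately show ?thesis using uv unfolding R_def by blast
qed


lemma choose_xyz:
  fixes P :: "'a set" and W :: "'a set set" and S :: "'a \<Rightarrow> 'a \<Rightarrow> 'a set"
  assumes fin: "finite P" and cP: "card P \<ge> 9" and cW: "card W \<le> 3" and finW: "finite W"
    and w2: "\<And>w. w \<in> W \<Longrightarrow> card (P \<inter> w) = 2"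
    and Sx: "\<And>x y. x \<in> S x y" and Sy: "\<And>x y. y \<in> S x y"
  shows "\<exists>x y z. x \<in> P \<and> y \<in> P \<and> z \<in> P \<and> x \<noteq> y \<and> x \<noteq> z \<and> y \<noteq> z \<and>
     S x y \<notin> W \<and> S x z \<notin> W \<and> (\<forall>w\<in>W. x \<in> w \<or> y \<in> w \<or> z \<in> w)"
proof (cases "\<exists>y\<in>P. card {w\<in>W. y \<notin> w} \<le> 1")
  case True
  then obtain y where y: "y \<in> P" "card {w\<in>W. y \<notin> w} \<le> 1" by blast
  obtain z where z: "z \<in> P" "z \<noteq> y" "\<forall>w\<in>W. y \<in> w \<or> z \<in> w"
  proof (cases "{w\<in>W. y \<notin> w} = {}")
    case True
    have "P - {y} \<noteq> {}"
    proof
      assume "P - {y} = {}"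
      then have "P \<subseteq> {y}" by blast
      then have "card P \<le> 1" using card_mono[of "{y}" P] by simp
      then show False using cP by simp
    qed
    then obtain z where "z \<in> P" "z \<noteq> y" by blast
    then show thesis using that True by blast
  next
    case False
    have "finite {w\<in>W. y \<notin> w}" using finW by simp
    then have "card {w\<in>W. y \<notin> w} \<noteq> 0" using False by simp
    then have "card {w\<in>W. y \<notin> w} = 1" using y(2) by linarith
    then obtain w' where w': "{w\<in>W. y \<notin> w} = {w'}" by (rule card_1_singletonE)
    then have w'W: "w' \<in> W" "y \<notin> w'" by auto
    then have "card (P \<inter> w') = 2" using w2 by simp
    then have "P \<inter> w' \<noteq> {}" by auto
    then obtain z where "z \<in> P" "z \<in> w'" by blast
    moreover have "z \<noteq> y" using w'W \<open>z \<in> w'\<close> by auto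
    moreover have "\<forall>w\<in>W. y \<in> w \<or> z \<in> w" using w' \<open>z \<in> w'\<close> by blast
    ultimately show thesis using that by blast
  qed
  define X where "X = {y,z} \<union> (\<Union>w\<in>W. P \<inter> w)"
  have "card (\<Union>w\<in>W. P \<inter> w) \<le> (\<Sum>w\<in>W. card (P \<inter> w))" by (rule card_UN_le[OF finW])
  also have "\<dots> = (\<Sum>w\<in>W. 2)" using w2 by (intro sum.cong) auto
  also have "\<dots> = 2 * card W" by simp
  finally have c1: "card (\<Union>w\<in>W. P \<inter> w) \<le> 6" using cW by linarith
  have "card X \<le> card {y,z} + card (\<Union>w\<in>W. P \<inter> w)" unfolding X_def by (rule card_Un_le)
  moreover have "card {y,z} \<le> 2" by (simp add: card_insert_if)
  ultimately have cX: "card X \<le> 8" using c1 by linarith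
  have XP: "X \<subseteq> P" unfolding X_def using y z by auto
  have "\<not> P \<subseteq> X"
  proof
    assume "P \<subseteq> X"
    then have "card P \<le> card X" using card_mono[of X P] XP fin finite_subset by blast
    then show False using cX cP by linarith
  qed
  then obtain x where x: "x \<in> P" "x \<notin> X" by blast
  have xw: "\<forall>w\<in>W. x \<notin> w" using x unfolding X_def by blast
  have "x \<noteq> y" "x \<noteq> z" using x unfolding X_def by auto
  moreover have "S x y \<notin> W" "S x z \<notin> W" using xw Sx by blast+
  ultimately show ?thesis using x y z by blast
next
  case False
  then have F: "\<And>y. y \<in> P \<Longrightarrow> card {w\<in>W. y \<notin> w} \<ge> 2" by auto
  have Pne: "P \<noteq> {}" using cP by auto
  have w2ne: "P \<inter> w \<noteq> {}" if "w \<in> W" for w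
  proof
    assume "P \<inter> w = {}"
    then show False using w2[OF that] by simp
  qed
  have "card W = 3"
  proof (rule ccontr)
    assume "card W \<noteq> 3"
    then have cW2: "card W \<le> 2" using cW by linarith
    show False
    proof (cases "W = {}")
      case True
      obtain y where "y \<in> P" using Pne by blast
      then show False using F[of y] True by simp
    next
      case False
      then obtain w where w: "w \<in> W" by blast
      then obtain y where y: "y \<in> P" "y \<in> w" using w2ne by blast
      have "{w'\<in>W. y \<notin> w'} \<subseteq> W - {w}" using y by auto
      then have "card {w'\<in>W. y \<notin> w'} \<le> card (W - {w})" using finW by (intro card_mono) auto
      also have "\<dots> = card W - 1" using w finW by simp
      finally show False using F[OF y(1)] cW2 by linarith
    qed
  qed
  then obtain w1 w2 w3 where W: "W = {w1,w2,w3}" "w1 \<noteq> w2" "w2 \<noteq> w3" "w1 \<noteq> w3"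
    unfolding card_3_iff by blast
  have key: False if "y \<in> P" "{w'\<in>W. y \<notin> w'} \<subseteq> {wc}" for y wc
  proof -
    have "card {w'\<in>W. y \<notin> w'} \<le> card {wc}" using that(2) by (intro card_mono) auto
    then show False using F[OF that(1)] by simp
  qed
  have p12: "P \<inter> w1 \<inter> w2 = {}"
  proof (rule ccontr)
    assume "P \<inter> w1 \<inter> w2 \<noteq> {}"
    then obtain y where y: "y \<in> P" "y \<in> w1" "y \<in> w2" by blast
    have "{w'\<in>W. y \<notin> w'} \<subseteq> {w3}" using W(1) y by auto
    then show False using key y by blast
  qed
  have p13: "P \<inter> w1 \<inter> w3 = {}"
  proof (rule ccontr)
    assume "P \<inter> w1 \<inter> w3 \<noteq> {}"
    then obtain y where y: "y \<in> P" "y \<in> w1" "y \<in> w3" by blast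
    have "{w'\<in>W. y \<notin> w'} \<subseteq> {w2}" using W(1) y by auto
    then show False using key y by blast
  qed
  have p23: "P \<inter> w2 \<inter> w3 = {}"
  proof (rule ccontr)
    assume "P \<inter> w2 \<inter> w3 \<noteq> {}"
    then obtain y where y: "y \<in> P" "y \<in> w2" "y \<in> w3" by blast
    have "{w'\<in>W. y \<notin> w'} \<subseteq> {w1}" using W(1) y by auto
    then show False using key y by blast
  qed
  obtain x where x: "x \<in> P" "x \<in> w1" using w2ne[of w1] W(1) by blast
  obtain y where y: "y \<in> P" "y \<in> w2" using w2ne[of w2] W(1) by blast
  obtain z where z: "z \<in> P" "z \<in> w3" using w2ne[of w3] W(1) by blast
  have d: "x \<noteq> y" "x \<noteq> z" "y \<noteq> z" using x y z p12 p13 p23 by auto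
  have "S x y \<notin> W"
  proof
    assume "S x y \<in> W"
    then consider "S x y = w1" | "S x y = w2" | "S x y = w3" using W by blast
    then show False
    proof cases
      case 1 then have "y \<in> w1" using Sy[of y x] by simp
      then show False using y p12 by auto
    next
      case 2 then have "x \<in> w2" using Sx[of x y] by simp
      then show False using x p12 by auto
    next
      case 3 then have "x \<in> w3" using Sx[of x y] by simp
      then show False using x p13 by auto
    qed
  qed
  moreover have "S x z \<notin> W"
  proof
    assume "S x z \<in> W"
    then consider "S x z = w1" | "S x z = w2" | "S x z = w3" using W by blast
    then show False
    proof cases
      case 1 then have "z \<in> w1" using Sy[of z x] by simp
      then show False using z p13 by auto
    next
      case 2 then have "x \<in> w2" using Sx[of x z] by simp
      then show False using x p12 by auto
    next
      case 3 then have "x \<in> w3" using Sx[of x z] by simp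
      then show False using x p13 by auto
    qed
  qed
  moreover have "\<forall>w\<in>W. x \<in> w \<or> y \<in> w \<or> z \<in> w" using W x y z by blast
  ultimately show ?thesis using x y z d by blast
qed


lemma walk_len2:
  assumes "is_walk V E ys" "hd ys = s" "last ys = t" "s \<noteq> t"
  shows "length ys \<ge> 2"
proof (rule ccontr)
  assume "\<not> length ys \<ge> 2"
  moreover have "ys \<noteq> []" using assms unfolding is_walk_def by auto
  ultimately have "length ys = 1" by (cases ys) (auto simp: not_le)
  then obtain a where "ys = [a]" by (metis One_nat_def length_0_conv length_Suc_conv)
  then show False using assms by simp
qed

lemma walk_eq2:
  assumes "is_walk V E ys" "hd ys = s" "last ys = t" "length ys = 2"
  shows "ys = [s,t]" "E s t"
proof -
  obtain a b where ab: "ys = [a,b]" using assms(4)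
    by (cases ys; cases "tl ys") auto
  then show "ys = [s,t]" using assms by simp
  have "E (ys ! 0) (ys ! Suc 0)" using assms unfolding is_walk_def by auto
  then show "E s t" using ab assms by simp
qed

lemma mv_direct:
  assumes "s \<in> V" "t \<in> V" "s \<noteq> t" "E s t"
  shows "mutually_visible V E U s t"
proof -
  have w: "is_walk V E [s,t]" using assms unfolding is_walk_def
    by (auto simp: less_Suc_eq nth_Cons')
  have "length [s,t] \<le> length ys" if "is_walk V E ys" "hd ys = s" "last ys = t" for ys
    using walk_len2[OF that assms(3)] by simp
  then have "is_shortest_path V E s t [s,t]" unfolding is_shortest_path_def
    using w by auto
  then show ?thesis unfolding mutually_visible_def by (intro exI[of _ "[s,t]"]) simp
qed

lemma mv_two:
  assumes "s \<in> V" "t \<in> V" "w \<in> V" "s \<noteq> t" "\<not> E s t" "E s w" "E w t" "w \<notin> U"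
  shows "mutually_visible V E U s t"
proof -
  have w: "is_walk V E [s,w,t]" using assms unfolding is_walk_def
    by (auto simp: less_Suc_eq nth_Cons')
  have "length [s,w,t] \<le> length ys" if "is_walk V E ys" "hd ys = s" "last ys = t" for ys
  proof (rule ccontr)
    assume "\<not> length [s,w,t] \<le> length ys"
    then have "length ys \<le> 2" by simp
    moreover have "length ys \<ge> 2" using walk_len2[OF that assms(4)] .
    ultimately have "length ys = 2" by simp
    then have "E s t" using walk_eq2[OF that] by simp
    then show False using assms by simp
  qed
  then have "is_shortest_path V E s t [s,w,t]" unfolding is_shortest_path_def using w by auto
  then show ?thesis unfolding mutually_visible_def using assms by (intro exI[of _ "[s,w,t]"]) simp
qed

lemma mv_needs:
  assumes mv: "mutually_visible V E U s t" and "s \<noteq> t" "\<not> E s t" "r \<in> V" "E s r" "E r t"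
    "s \<in> V" "t \<in> V"
  shows "\<exists>m\<in>V. m \<notin> U \<and> E s m \<and> E m t"
proof -
  obtain xs where xs: "is_shortest_path V E s t xs" "set (butlast (tl xs)) \<inter> U = {}"
    using mv unfolding mutually_visible_def by blast
  have wk: "is_walk V E xs" "hd xs = s" "last xs = t" using xs unfolding is_shortest_path_def by auto
  have w: "is_walk V E [s,r,t]" using assms unfolding is_walk_def
    by (auto simp: less_Suc_eq nth_Cons')
  then have "length xs \<le> 3" using xs unfolding is_shortest_path_def by fastforce
  moreover have "length xs \<ge> 2" using walk_len2[OF wk assms(2)] .
  moreover have "length xs \<noteq> 2" using walk_eq2[OF wk] assms(3) by auto
  ultimately have "length xs = 3" by linarith
  then obtain a b c where abc: "xs = [a,b,c]"
    by (cases xs; cases "tl xs"; cases "tl (tl xs)") auto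
  then have "a = s" "c = t" using wk by auto
  have all: "\<forall>i. Suc i < length xs \<longrightarrow> E (xs ! i) (xs ! Suc i)" using wk(1) unfolding is_walk_def by blast
  have "E a b" "E b c" using all[rule_format, of 0] all[rule_format, of 1] abc by auto
  then have "E s b" "E b t" using \<open>a = s\<close> \<open>c = t\<close> by auto
  moreover have "b \<in> V" using wk(1) abc unfolding is_walk_def by auto
  moreover have "b \<notin> U" using xs(2) abc by simp
  ultimately show ?thesis by blast
qed


lemma segV_eq: "seg_vertices P = (\<lambda>S. convex hull S) ` {S. S \<subseteq> P \<and> card S = 2}"
proof
  show "seg_vertices P \<subseteq> (\<lambda>S. convex hull S) ` {S. S \<subseteq> P \<and> card S = 2}"
  proof
    fix s assume "s \<in> seg_vertices P"
    then obtain a b where ab: "a \<in> P" "b \<in> P" "a \<noteq> b" "s = closed_segment a b"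
      unfolding seg_vertices_def by blast
    then have "s = convex hull {a,b}" by (simp add: segment_convex_hull)
    moreover have "{a,b} \<in> {S. S \<subseteq> P \<and> card S = 2}" using ab by auto
    ultimately show "s \<in> (\<lambda>S. convex hull S) ` {S. S \<subseteq> P \<and> card S = 2}" by blast
  qed
next
  show "(\<lambda>S. convex hull S) ` {S. S \<subseteq> P \<and> card S = 2} \<subseteq> seg_vertices P"
  proof
    fix s assume "s \<in> (\<lambda>S. convex hull S) ` {S. S \<subseteq> P \<and> card S = 2}"
    then obtain S where S: "S \<subseteq> P" "card S = 2" "s = convex hull S" by blast
    then obtain a b where ab: "S = {a,b}" "a \<noteq> b" unfolding card_2_iff by blast
    then have "s = closed_segment a b" using S by (simp add: segment_convex_hull)
    moreover have "a \<in> P" "b \<in> P" using ab S by auto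
    ultimately show "s \<in> seg_vertices P" using ab unfolding seg_vertices_def by blast
  qed
qed

lemma segV_card:
  assumes "finite P"
  shows "finite (seg_vertices P)" "card (seg_vertices P) = card P choose 2"
proof -
  have inj: "inj_on (\<lambda>S. convex hull S) {S. S \<subseteq> P \<and> card S = 2}"
  proof (rule inj_onI)
    fix S T assume S: "S \<in> {S. S \<subseteq> P \<and> card S = 2}" and T: "T \<in> {S. S \<subseteq> P \<and> card S = 2}"
      and eq: "convex hull S = convex hull T"
    obtain a b where ab: "S = {a,b}" using S unfolding card_2_iff by blast
    obtain c d where cd: "T = {c,d}" using T unfolding card_2_iff by blast
    have "closed_segment a b = closed_segment c d" using eq ab cd by (simp add: segment_convex_hull)
    then show "S = T" using ab cd by simp
  qed
  have fin: "finite {S. S \<subseteq> P \<and> card S = 2}" using assms by simp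
  show "finite (seg_vertices P)" unfolding segV_eq using fin by simp
  show "card (seg_vertices P) = card P choose 2" unfolding segV_eq card_image[OF inj]
    using n_subsets[OF assms] by simp
qed

lemma A_inj: "u \<in> arcA \<Longrightarrow> w \<in> arcA \<Longrightarrow> fst u = fst w \<Longrightarrow> u = w"
  using B_inj[OF rho_A rho_A, of u w] by (metis rho_fst rho_rho)

lemma pick2:
  fixes S :: "(real \<times> real) set"
  assumes fin: "finite S" and c: "card S \<ge> 2" and inj: "inj_on fst S"
  shows "\<exists>u v. u \<in> S \<and> v \<in> S \<and> fst u < fst v \<and> (\<forall>w\<in>S. w \<noteq> u \<and> w \<noteq> v \<longrightarrow> fst v < fst w)"
proof -
  have ne: "S \<noteq> {}" using c by auto
  have "Min (fst ` S) \<in> fst ` S" using fin ne by simp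
  then obtain u where u: "u \<in> S" "fst u = Min (fst ` S)" by (metis imageE)
  have umin: "\<And>w. w \<in> S \<Longrightarrow> fst u \<le> fst w" using u fin by simp
  have c1: "card (S - {u}) \<ge> 1" using c u fin by simp
  then have ne1: "S - {u} \<noteq> {}" by (metis card.empty not_one_le_zero)
  have fin1: "finite (S - {u})" using fin by simp
  have "Min (fst ` (S - {u})) \<in> fst ` (S - {u})" using fin1 ne1 by simp
  then obtain v where v: "v \<in> S - {u}" "fst v = Min (fst ` (S - {u}))" by (metis imageE)
  have vmin: "\<And>w. w \<in> S - {u} \<Longrightarrow> fst v \<le> fst w" using v fin1 by simp
  have "fst u \<noteq> fst v" using inj u v unfolding inj_on_def by auto
  then have uv: "fst u < fst v" using umin[of v] v by auto
  have "fst v < fst w" if "w \<in> S" "w \<noteq> u" "w \<noteq> v" for w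
  proof -
    have "fst v \<le> fst w" using vmin that by auto
    moreover have "fst v \<noteq> fst w" using inj that v unfolding inj_on_def by auto
    ultimately show ?thesis by auto
  qed
  then show ?thesis using u v uv by blast
qed

definition goodA :: "(real \<times> real) set \<Rightarrow> real \<times> real \<Rightarrow> real \<times> real \<Rightarrow> bool" where
  "goodA P u v \<longleftrightarrow> u \<in> P \<inter> arcA \<and> v \<in> P \<inter> arcA \<and> fst u < fst v \<and>
     (\<forall>e\<in>P \<inter> arcA. e \<notin> {u,v} \<longrightarrow> (fst e - fst u)*(fst e - fst v) > 0)"
definition goodB :: "(real \<times> real) set \<Rightarrow> real \<times> real \<Rightarrow> real \<times> real \<Rightarrow> bool" where
  "goodB P u v \<longleftrightarrow> u \<in> P \<inter> arcB \<and> v \<in> P \<inter> arcB \<and> fst u < fst v \<and>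
     (\<forall>e\<in>P \<inter> arcB. e \<notin> {u,v} \<longrightarrow> (fst e - fst u)*(fst e - fst v) > 0)"

lemma goodA_disj:
  assumes "P \<subseteq> arcA \<union> arcB" "goodA P u v" "e1 \<in> P" "e2 \<in> P" "e1 \<noteq> e2" "e1 \<notin> {u,v}" "e2 \<notin> {u,v}"
  shows "closed_segment u v \<inter> closed_segment e1 e2 = {}"
  proof -
  from assms(2) have g: "u \<in> arcA" "v \<in> arcA" "fst u < fst v"
    "\<forall>e\<in>P \<inter> arcA. e \<notin> {u,v} \<longrightarrow> (fst e - fst u)*(fst e - fst v) > 0"
    unfolding goodA_def by auto
  show ?thesis
  proof (rule consecA[OF g(1,2,3)])
    show "e1 \<in> arcA \<union> arcB" "e2 \<in> arcA \<union> arcB" using assms by auto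
    show "e1 \<noteq> e2" "e1 \<notin> {u,v}" "e2 \<notin> {u,v}" using assms by auto
    show "(fst e1 - fst u)*(fst e1 - fst v) > 0" if "e1 \<in> arcA" using g(4) that assms by auto
    show "(fst e2 - fst u)*(fst e2 - fst v) > 0" if "e2 \<in> arcA" using g(4) that assms by auto
  qed
qed

lemma goodB_disj:
  assumes "P \<subseteq> arcA \<union> arcB" "goodB P u v" "e1 \<in> P" "e2 \<in> P" "e1 \<noteq> e2" "e1 \<notin> {u,v}" "e2 \<notin> {u,v}"
  shows "closed_segment u v \<inter> closed_segment e1 e2 = {}"
  proof -
  from assms(2) have g: "u \<in> arcB" "v \<in> arcB" "fst u < fst v"
    "\<forall>e\<in>P \<inter> arcB. e \<notin> {u,v} \<longrightarrow> (fst e - fst u)*(fst e - fst v) > 0"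
    unfolding goodB_def by auto
  show ?thesis
  proof (rule consecB[OF g(1,2,3)])
    show "e1 \<in> arcA \<union> arcB" "e2 \<in> arcA \<union> arcB" using assms by auto
    show "e1 \<noteq> e2" "e1 \<notin> {u,v}" "e2 \<notin> {u,v}" using assms by auto
    show "(fst e1 - fst u)*(fst e1 - fst v) > 0" if "e1 \<in> arcB" using g(4) that assms by auto
    show "(fst e2 - fst u)*(fst e2 - fst v) > 0" if "e2 \<in> arcB" using g(4) that assms by auto
  qed
qed

lemma card4_distinct:
  assumes "card {a,b,c,d} = 4"
  shows "a \<noteq> b" "a \<noteq> c" "a \<noteq> d" "b \<noteq> c" "b \<noteq> d" "c \<noteq> d"
proof -
  have c3: "card {x,y,z} \<le> 3" for x y z :: 'a
  proof -
    have "card {y,z} \<le> 2" by (rule card_insert_le_m1) auto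
    then show ?thesis by (intro card_insert_le_m1) auto
  qed
  have h: False if "{a,b,c,d} = {x,y,z}" for x y z
    using assms c3[of x y z] that by simp
  show "a \<noteq> b" using h[of b c d] by auto
  show "a \<noteq> c" using h[of a b d] by auto
  show "a \<noteq> d" using h[of a b c] by auto
  show "b \<noteq> c" using h[of a c d] by auto
  show "b \<noteq> d" using h[of a b c] by auto
  show "c \<noteq> d" using h[of a b c] by auto
qed

lemma card4_le: "card {a,b,c,d} \<le> 4"
proof -
  have "card {c,d} \<le> 2" by (rule card_insert_le_m1) auto
  then have "card {b,c,d} \<le> 3" by (intro card_insert_le_m1) auto
  then show ?thesis by (intro card_insert_le_m1) auto
qed

lemma lower_key:
  assumes PAB: "P \<subseteq> arcA \<union> arcB"
    and A1: "c1 \<in> arcA" "d1 \<in> arcA"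
    and B2: "c2 \<in> arcB" "d2 \<in> arcB" "c3 \<in> arcB" "d3 \<in> arcB" "c4 \<in> arcB" "d4 \<in> arcB"
    and D: "{c2,d2} \<inter> {c3,d3} = {}" "{c2,d2} \<inter> {c4,d4} = {}" "{c3,d3} \<inter> {c4,d4} = {}"
    and S: "s1 \<in> P" "s2 \<in> P" "t1 \<in> P" "t2 \<in> P" "s1 \<noteq> s2" "t1 \<noteq> t2"
    and I: "closed_segment s1 s2 \<inter> closed_segment t1 t2 \<noteq> {}"
  shows "{c1,d1} \<inter> {s1,s2,t1,t2} = {} \<or> {c2,d2} \<inter> {s1,s2,t1,t2} = {} \<or>
         {c3,d3} \<inter> {s1,s2,t1,t2} = {} \<or> {c4,d4} \<inter> {s1,s2,t1,t2} = {}"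
proof (rule ccontr)
  define E where "E = {s1,s2,t1,t2}"
  assume "\<not> ?thesis"
  then have ne: "{c1,d1} \<inter> E \<noteq> {}" "{c2,d2} \<inter> E \<noteq> {}" "{c3,d3} \<inter> E \<noteq> {}" "{c4,d4} \<inter> E \<noteq> {}"
    unfolding E_def by simp_all
  obtain e1 where e1: "e1 \<in> {c1,d1}" "e1 \<in> E" using ne(1) by blast
  obtain e2 where e2: "e2 \<in> {c2,d2}" "e2 \<in> E" using ne(2) by blast
  obtain e3 where e3: "e3 \<in> {c3,d3}" "e3 \<in> E" using ne(3) by blast
  obtain e4 where e4: "e4 \<in> {c4,d4}" "e4 \<in> E" using ne(4) by blast
  have eA: "e1 \<in> arcA" using e1 A1 by auto
  have eB: "e2 \<in> arcB" "e3 \<in> arcB" "e4 \<in> arcB" using e2 e3 e4 B2 by auto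
  have n1: "e1 \<noteq> e2" "e1 \<noteq> e3" "e1 \<noteq> e4" using eA eB AB_disj by auto
  have n2: "e2 \<noteq> e3" "e2 \<noteq> e4" "e3 \<noteq> e4" using e2 e3 e4 D by blast+
  have "card {e1,e2,e3,e4} = 4" using n1 n2 by simp
  moreover have sub: "{e1,e2,e3,e4} \<subseteq> E" using e1 e2 e3 e4 by auto
  moreover have "card E \<le> 4" unfolding E_def by (rule card4_le)
  moreover have "finite E" unfolding E_def by simp
  ultimately have EE: "{e1,e2,e3,e4} = E" and cE: "card E = 4"
    using card_mono[OF \<open>finite E\<close> sub] card_subset_eq[OF \<open>finite E\<close> sub] by auto
  have dist: "s1 \<noteq> s2" "s1 \<noteq> t1" "s1 \<noteq> t2" "s2 \<noteq> t1" "s2 \<noteq> t2" "t1 \<noteq> t2"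
    using card4_distinct[of s1 s2 t1 t2] cE unfolding E_def by auto
  have inB: "x \<in> arcB" if "x \<in> E" "x \<noteq> e1" for x
  proof -
    have "x \<in> {e2,e3,e4}" using that EE by blast
    then show ?thesis using eB by blast
  qed
  have "e1 \<in> E" by fact
  then consider "e1 = s1" | "e1 = s2" | "e1 = t1" | "e1 = t2" unfolding E_def by blast
  then show False
  proof cases
    case 1
    have "closed_segment s1 s2 \<inter> closed_segment t1 t2 = {}"
      using dist eA 1 inB[of s2] inB[of t1] inB[of t2] unfolding E_def
      by (intro AB_BB) simp_all
    then show False using I by simp
  next
    case 2
    have "closed_segment s2 s1 \<inter> closed_segment t1 t2 = {}"
      using dist eA 2 inB[of s1] inB[of t1] inB[of t2] unfolding E_def
      by (intro AB_BB) simp_all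
    then show False using I by (simp add: closed_segment_commute)
  next
    case 3
    have "closed_segment t1 t2 \<inter> closed_segment s1 s2 = {}"
      using dist eA 3 inB[of s1] inB[of s2] inB[of t2] unfolding E_def
      by (intro AB_BB) simp_all
    then show False using I by blast
  next
    case 4
    have "closed_segment t2 t1 \<inter> closed_segment s1 s2 = {}"
      using dist eA 4 inB[of s1] inB[of s2] inB[of t1] unfolding E_def
      by (intro AB_BB) simp_all
    then show False using I by (auto simp: closed_segment_commute)
  qed
qed


lemma upper_bound:
  assumes gp: "general_position P" and fin: "finite P" and cP: "card P \<ge> 9"
    and mv: "mv_set (seg_vertices P) disj_adj U"
  shows "card U \<le> card (seg_vertices P) - 4"
proof (rule ccontr)
  define V where "V = seg_vertices P"
  assume "\<not> card U \<le> card (seg_vertices P) - 4"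
  then have cU: "card U > card V - 4" unfolding V_def by simp
  have UV: "U \<subseteq> V" using mv unfolding mv_set_def V_def by simp
  have finV: "finite V" unfolding V_def using segV_card[OF fin] by simp
  define W where "W = V - U"
  have finW: "finite W" unfolding W_def using finV by simp
  have "card W = card V - card U" unfolding W_def using UV finV by (simp add: card_Diff_subset finite_subset)
  moreover have "card U \<le> card V" using UV finV by (simp add: card_mono)
  ultimately have cW: "card W \<le> 3" using cU by linarith
  have segV: "closed_segment a b \<in> V" if "a \<in> P" "b \<in> P" "a \<noteq> b" for a b
    using that unfolding V_def seg_vertices_def by blast
  have Vseg: "\<exists>a b. a \<in> P \<and> b \<in> P \<and> a \<noteq> b \<and> w = closed_segment a b" if "w \<in> V" for w
    using that unfolding V_def seg_vertices_def by blast
  have w2: "card (P \<inter> w) = 2" if wW: "w \<in> W" for w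
  proof -
    have "w \<in> V" using wW unfolding W_def by simp
    then obtain a b where ab: "a \<in> P" "b \<in> P" "a \<noteq> b" "w = closed_segment a b"
      using Vseg[of w] by blast
    then have "P \<inter> w = {a,b}" using gp_seg_int[OF gp] by simp
    then show ?thesis using ab by simp
  qed
  obtain x y z where xyz: "x \<in> P" "y \<in> P" "z \<in> P" "x \<noteq> y" "x \<noteq> z" "y \<noteq> z"
    "closed_segment x y \<notin> W" "closed_segment x z \<notin> W" "\<forall>w\<in>W. x \<in> w \<or> y \<in> w \<or> z \<in> w"
    using choose_xyz[OF fin cP cW finW w2, of closed_segment] ends_in_segment by blast
  define s where "s = closed_segment x y"
  define t where "t = closed_segment x z"
  have sV: "s \<in> V" "t \<in> V" unfolding s_def t_def using xyz segV by auto
  have sU: "s \<in> U" "t \<in> U" using sV xyz unfolding s_def t_def W_def by auto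
  have st: "s \<noteq> t" unfolding s_def t_def using xyz by (auto simp: doubleton_eq_iff)
  have xs: "x \<in> s" "y \<in> s" "x \<in> t" "z \<in> t" unfolding s_def t_def by auto
  then have nadj: "\<not> disj_adj s t" unfolding disj_adj_def by blast
  obtain u v where uv: "u \<in> P" "v \<in> P" "u \<noteq> v" "closed_segment u v \<inter> s = {}"
      "closed_segment u v \<inter> t = {}"
    using common_nb[OF gp fin _ xyz(1-6)] cP unfolding s_def t_def by auto
  define r where "r = closed_segment u v"
  have rV: "r \<in> V" unfolding r_def using uv segV by auto
  have adj: "disj_adj s r" "disj_adj r t" unfolding disj_adj_def r_def using uv by auto
  have "mutually_visible V disj_adj U s t" using mv sU st unfolding mv_set_def V_def by blast
  then obtain m where m: "m \<in> V" "m \<notin> U" "disj_adj s m" "disj_adj m t"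
    using mv_needs[OF _ st nadj rV adj sV] by blast
  then have "m \<in> W" unfolding W_def by simp
  then have "x \<in> m \<or> y \<in> m \<or> z \<in> m" using xyz by blast
  then show False using m(3,4) xs unfolding disj_adj_def by blast
qed


lemma prodpos:
  fixes x a b :: real
  assumes "(x < a \<and> x < b) \<or> (a < x \<and> b < x)"
  shows "(x - a)*(x - b) > 0"
  using assms by (auto intro: mult_pos_pos mult_neg_neg)

lemma seg_ne: "{a,b} \<inter> {c,d} = {} \<Longrightarrow> closed_segment a b \<noteq> closed_segment (c::real\<times>real) d"
  by (auto simp: doubleton_eq_iff)

lemma lower_bound:
  assumes fin: "finite P" and PAB: "P \<subseteq> arcA \<union> arcB"
    and cA: "card (P \<inter> arcA) \<ge> 2" and cB: "card (P \<inter> arcB) \<ge> 6"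
  shows "\<exists>U. mv_set (seg_vertices P) disj_adj U \<and> card U = card (seg_vertices P) - 4"
proof -
  define V where "V = seg_vertices P"
  have finV: "finite V" unfolding V_def using segV_card[OF fin] by simp
  have segV: "closed_segment a b \<in> V" if "a \<in> P" "b \<in> P" "a \<noteq> b" for a b
    using that unfolding V_def seg_vertices_def by blast
  have Vseg: "\<exists>a b. a \<in> P \<and> b \<in> P \<and> a \<noteq> b \<and> w = closed_segment a b" if "w \<in> V" for w
    using that unfolding V_def seg_vertices_def by blast
  have injA: "inj_on fst (P \<inter> arcA)"
  proof (rule inj_onI)
    fix x y assume "x \<in> P \<inter> arcA" "y \<in> P \<inter> arcA" "fst x = fst y"
    then show "x = y" using A_inj by blast
  qed
  have injB: "inj_on fst S" if SS: "S \<subseteq> P \<inter> arcB" for S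
  proof (rule inj_onI)
    fix x y assume "x \<in> S" "y \<in> S" "fst x = fst y"
    then show "x = y" using B_inj SS by blast
  qed
  obtain a1 a2 where a: "a1 \<in> P \<inter> arcA" "a2 \<in> P \<inter> arcA" "fst a1 < fst a2"
      "\<forall>w\<in>P \<inter> arcA. w \<noteq> a1 \<and> w \<noteq> a2 \<longrightarrow> fst a2 < fst w"
    using pick2[OF _ cA injA] fin by auto
  define SB where "SB = P \<inter> arcB"
  have finSB: "finite SB" unfolding SB_def using fin by simp
  obtain b1 b2 where b12: "b1 \<in> SB" "b2 \<in> SB" "fst b1 < fst b2"
      "\<forall>w\<in>SB. w \<noteq> b1 \<and> w \<noteq> b2 \<longrightarrow> fst b2 < fst w"
    using pick2[OF finSB _ injB] cB unfolding SB_def by auto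
  define SB1 where "SB1 = SB - {b1,b2}"
  have "card SB1 = card SB - card {b1,b2}" unfolding SB1_def using b12 finSB
    by (intro card_Diff_subset) auto
  moreover have "b1 \<noteq> b2" using b12(3) by auto
  then have "card {b1,b2} = 2" by simp
  ultimately have cSB1: "card SB1 \<ge> 4" using cB unfolding SB_def by linarith
  have finSB1: "finite SB1" unfolding SB1_def using finSB by simp
  obtain b3 b4 where b34: "b3 \<in> SB1" "b4 \<in> SB1" "fst b3 < fst b4"
      "\<forall>w\<in>SB1. w \<noteq> b3 \<and> w \<noteq> b4 \<longrightarrow> fst b4 < fst w"
  proof -
    have sub: "SB1 \<subseteq> P \<inter> arcB" unfolding SB1_def SB_def by auto
    have c2: "card SB1 \<ge> 2" using cSB1 by linarith
    show ?thesis using pick2[OF finSB1 c2 injB[OF sub]] that by blast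
  qed
  define SB2 where "SB2 = SB1 - {b3,b4}"
  have "card SB2 = card SB1 - card {b3,b4}" unfolding SB2_def using b34 finSB1
    by (intro card_Diff_subset) auto
  moreover have "b3 \<noteq> b4" using b34(3) by auto
  then have "card {b3,b4} = 2" by simp
  ultimately have cSB2: "card SB2 \<ge> 2" using cSB1 by linarith
  have finSB2: "finite SB2" unfolding SB2_def using finSB1 by simp
  obtain b5 b6 where b56: "b5 \<in> SB2" "b6 \<in> SB2" "fst b5 < fst b6"
      "\<forall>w\<in>SB2. w \<noteq> b5 \<and> w \<noteq> b6 \<longrightarrow> fst b6 < fst w"
  proof -
    have sub: "SB2 \<subseteq> P \<inter> arcB" unfolding SB2_def SB1_def SB_def by auto
    show ?thesis using pick2[OF finSB2 cSB2 injB[OF sub]] that by blast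
  qed
  have o23: "fst b2 < fst b3" "fst b2 < fst b4" using b12(4) b34(1,2) unfolding SB1_def by auto
  have o45: "fst b4 < fst b5" "fst b4 < fst b6" using b34(4) b56(1,2) unfolding SB2_def by auto
  have inSB: "b1 \<in> SB" "b2 \<in> SB" "b3 \<in> SB" "b4 \<in> SB" "b5 \<in> SB" "b6 \<in> SB"
    using b12 b34 b56 unfolding SB2_def SB1_def by auto
  have gA: "goodA P a1 a2" unfolding goodA_def
  proof (intro conjI ballI impI)
    fix e assume "e \<in> P \<inter> arcA" "e \<notin> {a1,a2}"
    then have "fst a2 < fst e" using a(4) by auto
    then show "(fst e - fst a1)*(fst e - fst a2) > 0" using a(3) by (intro prodpos) auto
  qed (use a in auto)
  have gB1: "goodB P b1 b2" unfolding goodB_def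
  proof (intro conjI ballI impI)
    fix e assume "e \<in> P \<inter> arcB" "e \<notin> {b1,b2}"
    then have "fst b2 < fst e" using b12(4) unfolding SB_def by auto
    then show "(fst e - fst b1)*(fst e - fst b2) > 0" using b12(3) by (intro prodpos) auto
  qed (use b12 in \<open>auto simp: SB_def\<close>)
  have gB2: "goodB P b3 b4" unfolding goodB_def
  proof (intro conjI ballI impI)
    fix e assume e: "e \<in> P \<inter> arcB" "e \<notin> {b3,b4}"
    show "(fst e - fst b3)*(fst e - fst b4) > 0"
    proof (cases "e \<in> {b1,b2}")
      case True
      then have "fst e \<le> fst b2" using b12(3) by auto
      then show ?thesis using o23 b34(3) by (intro prodpos) auto
    next
      case False
      then have "e \<in> SB1" using e unfolding SB1_def SB_def by auto
      then have "fst b4 < fst e" using b34(4) e by auto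
      then show ?thesis using b34(3) by (intro prodpos) auto
    qed
  qed (use b34 inSB in \<open>auto simp: SB_def\<close>)
  have gB3: "goodB P b5 b6" unfolding goodB_def
  proof (intro conjI ballI impI)
    fix e assume e: "e \<in> P \<inter> arcB" "e \<notin> {b5,b6}"
    show "(fst e - fst b5)*(fst e - fst b6) > 0"
    proof (cases "e \<in> {b1,b2,b3,b4}")
      case True
      then have "fst e \<le> fst b4" using b12(3) b34(3) o23 by auto
      then show ?thesis using o45 b56(3) by (intro prodpos) auto
    next
      case False
      then have "e \<in> SB2" using e unfolding SB2_def SB1_def SB_def by auto
      then have "fst b6 < fst e" using b56(4) e by auto
      then show ?thesis using b56(3) by (intro prodpos) auto
    qed
  qed (use b56 inSB in \<open>auto simp: SB_def\<close>)
  have D: "{b1,b2} \<inter> {b3,b4} = {}" "{b1,b2} \<inter> {b5,b6} = {}" "{b3,b4} \<inter> {b5,b6} = {}"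
    using b34(1,2) b56(1,2) unfolding SB2_def SB1_def by auto
  have aA: "a1 \<in> arcA" "a2 \<in> arcA" using a by auto
  have bB: "b1 \<in> arcB" "b2 \<in> arcB" "b3 \<in> arcB" "b4 \<in> arcB" "b5 \<in> arcB" "b6 \<in> arcB"
    using inSB unfolding SB_def by auto
  have DA: "{a1,a2} \<inter> {b1,b2} = {}" "{a1,a2} \<inter> {b3,b4} = {}" "{a1,a2} \<inter> {b5,b6} = {}"
    using aA bB AB_disj by blast+
  define W where "W = {closed_segment a1 a2, closed_segment b1 b2, closed_segment b3 b4, closed_segment b5 b6}"
  have ne: "closed_segment a1 a2 \<noteq> closed_segment b1 b2" "closed_segment a1 a2 \<noteq> closed_segment b3 b4"
    "closed_segment a1 a2 \<noteq> closed_segment b5 b6" "closed_segment b1 b2 \<noteq> closed_segment b3 b4"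
    "closed_segment b1 b2 \<noteq> closed_segment b5 b6" "closed_segment b3 b4 \<noteq> closed_segment b5 b6"
    using seg_ne DA D by blast+
  have cW: "card W = 4" unfolding W_def using ne by simp
  have pr: "a1 \<in> P" "a2 \<in> P" "a1 \<noteq> a2" "b1 \<in> P" "b2 \<in> P" "b1 \<noteq> b2" "b3 \<in> P" "b4 \<in> P" "b3 \<noteq> b4"
     "b5 \<in> P" "b6 \<in> P" "b5 \<noteq> b6"
    using a b12 b34 b56 inSB unfolding SB_def by auto
  have WV: "W \<subseteq> V" unfolding W_def using pr segV by auto
  define U where "U = V - W"
  have cU: "card U = card V - 4" unfolding U_def using WV finV cW by (simp add: card_Diff_subset finite_subset)
  have "mv_set V disj_adj U" unfolding mv_set_def
  proof (intro conjI ballI impI)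
    show "U \<subseteq> V" unfolding U_def by auto
    fix s t assume sU: "s \<in> U" and tU: "t \<in> U" and st: "s \<noteq> t"
    have sV: "s \<in> V" "t \<in> V" using sU tU unfolding U_def by auto
    obtain s1 s2 where s12: "s1 \<in> P" "s2 \<in> P" "s1 \<noteq> s2" "s = closed_segment s1 s2" using Vseg[OF sV(1)] by blast
    obtain t1 t2 where t12: "t1 \<in> P" "t2 \<in> P" "t1 \<noteq> t2" "t = closed_segment t1 t2" using Vseg[OF sV(2)] by blast
    show "mutually_visible V disj_adj U s t"
    proof (cases "s \<inter> t = {}")
      case True
      then show ?thesis using sV st by (intro mv_direct) (auto simp: disj_adj_def)
    next
      case False
      have gen: "mutually_visible V disj_adj U s t"
        if g: "goodA P c d \<or> goodB P c d" and cdW: "closed_segment c d \<in> W"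
          and cdE: "{c,d} \<inter> {s1,s2,t1,t2} = {}" for c d
      proof -
        have "closed_segment c d \<inter> s = {}"
          using g s12 cdE goodA_disj[OF PAB, of c d s1 s2] goodB_disj[OF PAB, of c d s1 s2] by auto
        moreover have "closed_segment c d \<inter> t = {}"
          using g t12 cdE goodA_disj[OF PAB, of c d t1 t2] goodB_disj[OF PAB, of c d t1 t2] by auto
        moreover have "closed_segment c d \<notin> U" using cdW unfolding U_def by simp
        moreover have "closed_segment c d \<in> V" using cdW WV by auto
        ultimately show ?thesis using sV st False
          by (intro mv_two[where w="closed_segment c d"]) (auto simp: disj_adj_def)
      qed
      have "{a1,a2} \<inter> {s1,s2,t1,t2} = {} \<or> {b1,b2} \<inter> {s1,s2,t1,t2} = {} \<or>
         {b3,b4} \<inter> {s1,s2,t1,t2} = {} \<or> {b5,b6} \<inter> {s1,s2,t1,t2} = {}"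
        using False s12 t12 by (intro lower_key[OF PAB aA bB D]) auto
      then show ?thesis
      proof (elim disjE)
        assume "{a1,a2} \<inter> {s1,s2,t1,t2} = {}" then show ?thesis using gen[of a1 a2] gA unfolding W_def by auto
      next
        assume "{b1,b2} \<inter> {s1,s2,t1,t2} = {}" then show ?thesis using gen[of b1 b2] gB1 unfolding W_def by auto
      next
        assume "{b3,b4} \<inter> {s1,s2,t1,t2} = {}" then show ?thesis using gen[of b3 b4] gB2 unfolding W_def by auto
      next
        assume "{b5,b6} \<inter> {s1,s2,t1,t2} = {}" then show ?thesis using gen[of b5 b6] gB3 unfolding W_def by auto
      qed
    qed
  qed
  then show ?thesis using cU unfolding V_def by blast
qed


theorem proposition6:
  fixes P :: "(real \<times> real) set" and p q :: nat
  assumes "p \<ge> 3" and "q \<ge> 6"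
    and "double_chain P p q"
    and "general_position P"
  shows "mu (seg_vertices P) disj_adj = (p + q choose 2) - 4"
proof -
  have fin: "finite P" and PAB: "P \<subseteq> arcA \<union> arcB" and cA: "card (P \<inter> arcA) = p"
    and cB: "card (P \<inter> arcB) = q"
    using assms(3) unfolding double_chain_def by auto
  have "P = (P \<inter> arcA) \<union> (P \<inter> arcB)" using PAB by auto
  moreover have "(P \<inter> arcA) \<inter> (P \<inter> arcB) = {}" using AB_disj by auto
  ultimately have cP: "card P = p + q" using fin cA cB card_Un_disjoint[of "P \<inter> arcA" "P \<inter> arcB"]
    by simp
  define V where "V = seg_vertices P"
  have finV: "finite V" and cV: "card V = (p + q) choose 2"
    unfolding V_def using segV_card[OF fin] cP by auto
  obtain U0 where U0: "mv_set V disj_adj U0" "card U0 = card V - 4"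
    using lower_bound[OF fin PAB] cA cB assms(1,2) unfolding V_def by auto
  have up: "card U \<le> card V - 4" if "mv_set V disj_adj U" for U
    using upper_bound[OF assms(4) fin _ that[unfolded V_def]] cP assms(1,2) unfolding V_def by auto
  define M where "M = {card U | U. mv_set V disj_adj U}"
  have "M \<subseteq> {..card V}"
  proof
    fix k assume "k \<in> M"
    then obtain U where "k = card U" "mv_set V disj_adj U" unfolding M_def by blast
    then have "U \<subseteq> V" unfolding mv_set_def by simp
    then show "k \<in> {..card V}" using \<open>k = card U\<close> finV by (simp add: card_mono)
  qed
  then have finM: "finite M" using finite_subset by blast
  have "Max M = card V - 4"
  proof (rule Max_eqI[OF finM])
    show "y \<le> card V - 4" if "y \<in> M" for y using that up unfolding M_def by blast
    show "card V - 4 \<in> M" using U0 unfolding M_def by (metis (mono_tags, lifting) mem_Collect_eq)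
  qed
  then show ?thesis unfolding mu_def M_def V_def[symmetric] using cV by simp
qed

end
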